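(* Fix $(\mu,\sigma)\in S_\lambda\times\Omega$, and let $\widehat\sigma\in\Omega$ be such that the auxiliary TASEP transition probability $\mathbb P(\widehat\sigma\to\sigma)$ is positive. Then there is a family $(g^{\widehat\sigma}_{\widehat\mu})_{\widehat\mu\in S_\lambda}$ of functions $\mathbb R_{>1}\to\mathbb R$ with $g^{\widehat\sigma}_{\widehat\mu}(z)=O(1/z)$ as $z\to\infty$ such that, for all $R>1$, \[\sum_{\widehat\mu\in S_\lambda}\mathbb P\big((\widehat\mu,\widehat\sigma)\to(\mu,\sigma)\big)\,\Psi_{\widehat\mu}(\widehat\sigma\boldsymbol\chi)\,\big(1+g^{\widehat\sigma}_{\widehat\mu}(R)\big)=\Psi_\mu(\sigma\boldsymbol\chi)\,\mathbb P(\widehat\sigma\to\sigma),\] where the probabilities on the left are transition probabilities of $\blacktriangle\mathrm{iTASEP}_\lambda$ and $\boldsymbol\chi$ depends on $R$.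
   Context: Fix parameters $a_k\in(0,1)$ ($k\ge0$) and a nondecreasing tuple $\lambda$ of nonnegative integers with rearrangement set $S_\lambda$. For $w\in\mathfrak S_n$, $wy=(y_{w^{-1}(1)},\dots,y_{w^{-1}(n)})$ and $(wf)(\mathbf x)=f(w\mathbf x)$. Indices mod $n$; $\overline s_i$ ($i\in\mathbb Z/n\mathbb Z$) the transposition of $i,i+1$; $c=(1\,2\cdots n)$. Inhomogeneous TASEP polynomials $(\Psi_\mu(\mathbf x))_{\mu\in S_\lambda}$ (coefficients rational in the $a$'s) are determined up to a common scalar (fixed) by: $\frac{x_i(x_{i+1}-a_{\mu_{i+1}})}{a_{\mu_{i+1}}(x_i-x_{i+1})}(1-\overline s_i)\Psi_\mu=\Psi_{\overline s_i\mu}$ if $\mu_i<\mu_{i+1}$; $\overline s_i\Psi_\mu=\Psi_\mu$ if $\mu_i=\mu_{i+1}$; $c\Psi_{c\mu}=\Psi_\mu$. Stones $\blacktriangle_1,\dots,\blacktriangle_n$ with densities in $\{1,2\}$, $1=\varrho(\blacktriangle_1)\le\cdots\le\varrho(\blacktriangle_n)=2$. $\Omega$: the $\sigma\in\mathfrak S_n$ such that stones of each density appear in the same cyclic order in $\blacktriangle_{\sigma^{-1}(1)},\dots,\blacktriangle_{\sigma^{-1}(n)}$ as in $\blacktriangle_1,\dots,\blacktriangle_n$. $\mathfrak K(\sigma)=\#\{i:\varrho(\blacktriangle_{\sigma^{-1}(i)})<\varrho(\blacktriangle_{\sigma^{-1}(i+1)})\}$. Auxiliary TASEP on $\Omega$: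 $\mathbb P(\sigma\to\overline s_i\sigma)=1/n$ if $\varrho(\blacktriangle_{\sigma^{-1}(i)})<\varrho(\blacktriangle_{\sigma^{-1}(i+1)})$, $\mathbb P(\sigma\to\sigma)=1-\mathfrak K(\sigma)/n$, others $0$. For $j$ with $\varrho(\blacktriangle_j)=1$, $p(j)\in[0,1)$ fixed. For $R>1$, $\boldsymbol\chi=(\chi_j)$ with $\chi_j=1/p(j)$ if $\varrho(\blacktriangle_j)=1$ and $p(j)>0$, $\chi_j=R$ otherwise. $\blacktriangle\mathrm{iTASEP}_\lambda$ on $S_\lambda\times\Omega$: if $\varrho(\blacktriangle_{\sigma^{-1}(i)})<\varrho(\blacktriangle_{\sigma^{-1}(i+1)})$ and $\mu_i>\mu_{i+1}$, $\mathbb P((\mu,\sigma)\to(\overline s_i\mu,\overline s_i\sigma))=\frac1np(\sigma^{-1}(i))a_{\mu_i}$, $\mathbb P((\mu,\sigma)\to(\mu,\overline s_i\sigma))=\frac1n[1-p(\sigma^{-1}(i))a_{\mu_i}]$; if the density condition holds and $\mu_i\le\mu_{i+1}$, $\mathbb P((\mu,\sigma)\to(\mu,\overline s_i\sigma))=\frac1n$; $\mathbb P((\mu,\sigma)\to(\mu,\sigma))=1-\mathfrak K(\sigma)/n$; others $0$. *)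

theory Defs
  imports "HOL-Analysis.Analysis" "HOL-Combinatorics.Permutations"
begin

text \<open>Conventions: positions are 0-indexed, 0..n-1 (paper: 1..n); indices mod n.
Tuples are functions nat => _, only entries below n matter.
Permutations of {0..<n} are functions nat => nat with  w permutes {..<n}.\<close>

definition nxt :: "nat \<Rightarrow> nat \<Rightarrow> nat" where
  "nxt n i = (i + 1) mod n"

definition trsp :: "nat \<Rightarrow> nat \<Rightarrow> nat \<Rightarrow> nat" where
  "trsp i j k = (if k = i then j else if k = j then i else k)"

definition sbar :: "nat \<Rightarrow> nat \<Rightarrow> nat \<Rightarrow> nat" where
  "sbar n i = trsp i (nxt n i)"

definition cyc :: "nat \<Rightarrow> nat \<Rightarrow> nat" where
  "cyc n i = (if i < n then (i + 1) mod n else i)"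

definition act :: "(nat \<Rightarrow> nat) \<Rightarrow> (nat \<Rightarrow> 'a) \<Rightarrow> nat \<Rightarrow> 'a" where
  "act w y = y \<circ> inv w"

definition Srearr :: "nat \<Rightarrow> (nat \<Rightarrow> nat) \<Rightarrow> (nat \<Rightarrow> nat) set" where
  "Srearr n lam = {act w lam | w. w permutes {..<n}}"

definition poly_fun :: "nat \<Rightarrow> ((nat \<Rightarrow> real) \<Rightarrow> real) \<Rightarrow> bool" where
  "poly_fun n f \<longleftrightarrow> (\<exists>(d::nat) (c::(nat \<Rightarrow> nat) \<Rightarrow> real).
     \<forall>x. f x = (\<Sum>\<alpha>\<in>{\<alpha>. (\<forall>i. \<alpha> i \<le> d) \<and> (\<forall>i\<ge>n. \<alpha> i = 0)}.
                    c \<alpha> * (\<Prod>i<n. x i ^ \<alpha> i)))"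

definition is_TASEP_family ::
  "nat \<Rightarrow> (nat \<Rightarrow> real) \<Rightarrow> (nat \<Rightarrow> nat) \<Rightarrow> ((nat \<Rightarrow> nat) \<Rightarrow> (nat \<Rightarrow> real) \<Rightarrow> real) \<Rightarrow> bool" where
  "is_TASEP_family n a lam Psi \<longleftrightarrow>
     (\<forall>\<mu>\<in>Srearr n lam. poly_fun n (Psi \<mu>)) \<and>
     (\<exists>\<mu>\<in>Srearr n lam. \<exists>x. Psi \<mu> x \<noteq> 0) \<and>
     (\<forall>\<mu>\<in>Srearr n lam. \<forall>i<n. \<mu> i < \<mu> (nxt n i) \<longrightarrow>
        (\<forall>x. x i \<noteq> x (nxt n i) \<longrightarrow>
           x i * (x (nxt n i) - a (\<mu> (nxt n i))) / (a (\<mu> (nxt n i)) * (x i - x (nxt n i)))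
             * (Psi \<mu> x - Psi \<mu> (act (sbar n i) x))
           = Psi (act (sbar n i) \<mu>) x)) \<and>
     (\<forall>\<mu>\<in>Srearr n lam. \<forall>i<n. \<mu> i = \<mu> (nxt n i) \<longrightarrow>
        (\<forall>x. Psi \<mu> (act (sbar n i) x) = Psi \<mu> x)) \<and>
     (\<forall>\<mu>\<in>Srearr n lam. \<forall>x. Psi (act (cyc n) \<mu>) (act (cyc n) x) = Psi \<mu> x)"

text \<open>Omega: stones of each density appear in the same cyclic order\<close>
definition Omega :: "nat \<Rightarrow> (nat \<Rightarrow> nat) \<Rightarrow> (nat \<Rightarrow> nat) set" where
  "Omega n rho = {\<sigma>. \<sigma> permutes {..<n} \<and>
     (\<forall>d\<in>{1,2}. \<exists>k. filter (\<lambda>j. rho j = d) (map (inv \<sigma>) [0..<n])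
                     = rotate k (filter (\<lambda>j. rho j = d) [0..<n]))}"

definition dcond :: "nat \<Rightarrow> (nat \<Rightarrow> nat) \<Rightarrow> (nat \<Rightarrow> nat) \<Rightarrow> nat \<Rightarrow> bool" where
  "dcond n rho \<sigma> i \<longleftrightarrow> rho (inv \<sigma> i) < rho (inv \<sigma> (nxt n i))"

definition Kfrak :: "nat \<Rightarrow> (nat \<Rightarrow> nat) \<Rightarrow> (nat \<Rightarrow> nat) \<Rightarrow> nat" where
  "Kfrak n rho \<sigma> = card {i. i < n \<and> dcond n rho \<sigma> i}"

definition auxP :: "nat \<Rightarrow> (nat \<Rightarrow> nat) \<Rightarrow> (nat \<Rightarrow> nat) \<Rightarrow> (nat \<Rightarrow> nat) \<Rightarrow> real" where
  "auxP n rho \<sigma> \<tau> =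
     (\<Sum>i<n. if dcond n rho \<sigma> i \<and> \<tau> = sbar n i \<circ> \<sigma> then 1 / real n else 0)
     + (if \<tau> = \<sigma> then 1 - real (Kfrak n rho \<sigma>) / real n else 0)"

definition fullP :: "nat \<Rightarrow> (nat \<Rightarrow> real) \<Rightarrow> (nat \<Rightarrow> nat) \<Rightarrow> (nat \<Rightarrow> real) \<Rightarrow>
    (nat \<Rightarrow> nat) \<Rightarrow> (nat \<Rightarrow> nat) \<Rightarrow> (nat \<Rightarrow> nat) \<Rightarrow> (nat \<Rightarrow> nat) \<Rightarrow> real" where
  "fullP n a rho p \<mu> \<sigma> \<mu>' \<tau> =
     (\<Sum>i<n. if dcond n rho \<sigma> i then
        (if \<mu> i > \<mu> (nxt n i) then
            (if \<mu>' = act (sbar n i) \<mu> \<and> \<tau> = sbar n i \<circ> \<sigma>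
             then p (inv \<sigma> i) * a (\<mu> i) / real n else 0)
          + (if \<mu>' = \<mu> \<and> \<tau> = sbar n i \<circ> \<sigma>
             then (1 - p (inv \<sigma> i) * a (\<mu> i)) / real n else 0)
         else (if \<mu>' = \<mu> \<and> \<tau> = sbar n i \<circ> \<sigma> then 1 / real n else 0))
      else 0)
     + (if \<mu>' = \<mu> \<and> \<tau> = \<sigma> then 1 - real (Kfrak n rho \<sigma>) / real n else 0)"

definition chi :: "(nat \<Rightarrow> nat) \<Rightarrow> (nat \<Rightarrow> real) \<Rightarrow> real \<Rightarrow> nat \<Rightarrow> real" where
  "chi rho p R j = (if rho j = 1 \<and> p j > 0 then 1 / p j else R)"

end

theory Submission
  imports Defs
begin


lemma sbar_transpose: "sbar n i = Transposition.transpose i (nxt n i)"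
  by (simp add: sbar_def trsp_def Transposition.transpose_def fun_eq_iff)

lemma nxt_lt: "0 < n \<Longrightarrow> nxt n i < n" by (simp add: nxt_def)

lemma nxt_ne: "2 \<le> n \<Longrightarrow> i < n \<Longrightarrow> nxt n i \<noteq> i"
proof -
  assume a: "2 \<le> n" "i < n"
  show ?thesis
  proof (cases "i + 1 < n")
    case True thus ?thesis by (simp add: nxt_def)
  next
    case False
    with a have "i + 1 = n" by auto
    with a show ?thesis by (auto simp: nxt_def)
  qed
qed

lemma sbar_perm: "2 \<le> n \<Longrightarrow> i < n \<Longrightarrow> sbar n i permutes {..<n}"
  by (simp add: sbar_transpose permutes_swap_id nxt_lt)

lemma sbar_inv[simp]: "inv (sbar n i) = sbar n i"
  by (simp add: sbar_transpose)

lemma sbar_invol[simp]: "sbar n i (sbar n i k) = k"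
  by (simp add: sbar_transpose)

lemma act_sbar_i[simp]: "act (sbar n i) x i = x (nxt n i)"
  by (simp add: act_def sbar_transpose)
lemma act_sbar_j[simp]: "act (sbar n i) x (nxt n i) = x i"
  by (simp add: act_def sbar_transpose)

lemma act_act: "bij f \<Longrightarrow> bij g \<Longrightarrow> act f (act g x) = act (f \<circ> g) x"
  by (simp add: act_def o_inv_distrib o_assoc)

lemma act_sbar_invol[simp]: "act (sbar n i) (act (sbar n i) x) = x"
  by (simp add: act_def fun_eq_iff)

lemma act_sbar_eq: "x i = x (nxt n i) \<Longrightarrow> act (sbar n i) x = x"
  by (auto simp add: act_def fun_eq_iff sbar_transpose Transposition.transpose_def)

lemma Srearr_act: "2 \<le> n \<Longrightarrow> i < n \<Longrightarrow> \<mu> \<in> Srearr n lam \<Longrightarrow> act (sbar n i) \<mu> \<in> Srearr n lam"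
proof -
  assume a: "2 \<le> n" "i < n" "\<mu> \<in> Srearr n lam"
  then obtain w where w: "w permutes {..<n}" "\<mu> = act w lam" by (auto simp: Srearr_def)
  have "act (sbar n i) \<mu> = act (sbar n i \<circ> w) lam"
    using w a by (simp add: act_act permutes_bij[OF w(1)] permutes_bij[OF sbar_perm[OF a(1,2)]])
  moreover have "sbar n i \<circ> w permutes {..<n}" using w a by (simp add: permutes_compose sbar_perm)
  ultimately show ?thesis by (auto simp: Srearr_def)
qed

lemma Srearr_finite: "finite (Srearr n lam)"
proof -
  have "Srearr n lam = (\<lambda>w. act w lam) ` {w. w permutes {..<n}}" by (auto simp: Srearr_def)
  thus ?thesis by (simp add: finite_permutations)
qed

lemma bigo_lem: "(A::real) < 1 \<Longrightarrow> (\<lambda>R. c / (R - A)) \<in> O[at_top](\<lambda>z. 1 / z)"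
proof -
  assume A: "A < 1"
  have "eventually (\<lambda>R. norm (c / (R - A)) \<le> (2 * \<bar>c\<bar>) * norm (1 / R)) at_top"
    using eventually_ge_at_top[of "2::real"]
  proof eventually_elim
    case (elim R)
    hence p: "R - A \<ge> R / 2" "R - A > 0" using A by auto
    have "norm (c / (R - A)) = \<bar>c\<bar> / (R - A)" using p by (simp add: abs_div)
    also have "\<dots> \<le> \<bar>c\<bar> / (R/2)" using p elim by (intro divide_left_mono) auto
    also have "\<dots> = 2 * \<bar>c\<bar> * norm (1/R)" using elim by simp
    finally show ?case .
  qed
  thus ?thesis by (intro bigoI) 
qed



lemma Psi_exch:
  assumes "is_TASEP_family n a lam Psi" "\<mu> \<in> Srearr n lam" "i < n" "\<mu> i < \<mu> (nxt n i)"
    "x i \<noteq> x (nxt n i)"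
  shows "x i * (x (nxt n i) - a (\<mu> (nxt n i))) / (a (\<mu> (nxt n i)) * (x i - x (nxt n i)))
             * (Psi \<mu> x - Psi \<mu> (act (sbar n i) x))
           = Psi (act (sbar n i) \<mu>) x"
  using assms unfolding is_TASEP_family_def by blast

lemma Psi_sym:
  assumes "is_TASEP_family n a lam Psi" "\<mu> \<in> Srearr n lam" "i < n" "\<mu> i = \<mu> (nxt n i)"
  shows "Psi \<mu> (act (sbar n i) x) = Psi \<mu> x"
  using assms unfolding is_TASEP_family_def by blast

lemma not_fix: "2 \<le> n \<Longrightarrow> k < n \<Longrightarrow> \<sigma> permutes {..<n} \<Longrightarrow> \<sigma> \<noteq> sbar n k \<circ> \<sigma>"
proof
  assume a: "2 \<le> n" "k < n" "\<sigma> permutes {..<n}" "\<sigma> = sbar n k \<circ> \<sigma>"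
  have "\<sigma> (inv \<sigma> k) = (sbar n k \<circ> \<sigma>) (inv \<sigma> k)" using a(4) by simp
  hence "k = nxt n k" using permutes_inverses(1)[OF a(3)] by (simp add: sbar_transpose)
  thus False using nxt_ne[OF a(1,2)] by simp
qed

lemma sum_if_delta: "finite S \<Longrightarrow> c \<in> S \<Longrightarrow> (\<Sum>h\<in>S. (if h = c then f h else 0)) = (f c :: real)"
  by (simp add: sum.delta)

lemma L1: fixes P A R D n :: real
  assumes "P > 0" "R - A \<noteq> 0" "A \<noteq> 0" "1/P - R \<noteq> 0" "n > 0"
  shows "(1 - P * A) / n * ((1/P) * (R - A) / (A * (1/P - R)) * D) * (1 + A / (R - A))
       = R * (1/P - A) / (A * (1/P - R)) * D * (1 / n)"
proof -
  have a: "1 + A / (R - A) = R / (R - A)" using assms by (simp add: field_simps)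
  have b: "(1 - P * A) * (1/P) = 1/P - A" using assms by (simp add: field_simps)
  have "(1 - P * A) / n * ((1/P) * (R - A) / (A * (1/P - R)) * D) * (1 + A / (R - A))
     = ((1 - P * A) * (1/P)) * ((R - A) / (R - A)) * R * D / (A * (1/P - R) * n)"
    unfolding a by (simp add: divide_inverse inverse_mult_distrib ac_simps)
  also have "\<dots> = (1/P - A) * R * D / (A * (1/P - R) * n)" using assms b by simp
  finally show ?thesis by simp
qed
lemma L2: fixes P A R Q S n :: real
  assumes "P > 0" "R - A \<noteq> 0" "A \<noteq> 0" "1/P - R \<noteq> 0" "n > 0"
  shows "P * A / n * ((1/P) * (R - A) / (A * (1/P - R)) * (Q - S)) * (1 + (A - 1/P) / (R - A)) + 1 / n * Q
       = S * (1 / n)"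
proof -
  have a: "1 + (A - 1/P) / (R - A) = (R - 1/P) / (R - A)" using assms by (simp add: field_simps)
  have b: "(R - 1/P) / (1/P - R) = -1" using assms by (simp add: field_simps)
  have "P * A / n * ((1/P) * (R - A) / (A * (1/P - R)) * (Q - S)) * (1 + (A - 1/P) / (R - A))
     = (P * (1/P)) * (A / A) * ((R - A) / (R - A)) * ((R - 1/P) / (1/P - R)) * (Q - S) / n"
    unfolding a by (simp add: divide_inverse inverse_mult_distrib ac_simps)
  also have "\<dots> = - (Q - S) / n" using assms b by simp
  finally have X: "P * A / n * ((1/P) * (R - A) / (A * (1/P - R)) * (Q - S)) * (1 + (A - 1/P) / (R - A)) = - (Q - S) / n" .
  show ?thesis unfolding X using assms by (simp add: field_simps)
qed
theorem lemma6p2: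
  fixes n :: nat and a :: "nat \<Rightarrow> real" and lam :: "nat \<Rightarrow> nat"
    and Psi :: "(nat \<Rightarrow> nat) \<Rightarrow> (nat \<Rightarrow> real) \<Rightarrow> real"
    and rho :: "nat \<Rightarrow> nat" and p :: "nat \<Rightarrow> real"
    and \<mu> \<sigma> \<sigma>h :: "nat \<Rightarrow> nat"
  assumes n2: "2 \<le> n"
    and a_range: "\<And>k. 0 < a k \<and> a k < 1"
    and lam_mono: "\<And>i j. i \<le> j \<Longrightarrow> j < n \<Longrightarrow> lam i \<le> lam j"
    and Psi: "is_TASEP_family n a lam Psi"
    and rho_vals: "\<And>j. j < n \<Longrightarrow> rho j \<in> {1, 2}"
    and rho_mono: "\<And>i j. i \<le> j \<Longrightarrow> j < n \<Longrightarrow> rho i \<le> rho j"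
    and rho_first: "rho 0 = 1" and rho_last: "rho (n - 1) = 2"
    and p_range: "\<And>j. j < n \<Longrightarrow> rho j = 1 \<Longrightarrow> 0 \<le> p j \<and> p j < 1"
    and mu: "\<mu> \<in> Srearr n lam" and sigma: "\<sigma> \<in> Omega n rho"
    and sigmah: "\<sigma>h \<in> Omega n rho" and pos: "auxP n rho \<sigma>h \<sigma> > 0"
  shows "\<exists>g :: (nat \<Rightarrow> nat) \<Rightarrow> real \<Rightarrow> real.
           (\<forall>\<mu>h\<in>Srearr n lam. g \<mu>h \<in> O[at_top](\<lambda>z. 1 / z)) \<and>
           (\<forall>R>1. (\<Sum>\<mu>h\<in>Srearr n lam.
                     fullP n a rho p \<mu>h \<sigma>h \<mu> \<sigma> * Psi \<mu>h (act \<sigma>h (chi rho p R))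
                     * (1 + g \<mu>h R))
                  = Psi \<mu> (act \<sigma> (chi rho p R)) * auxP n rho \<sigma>h \<sigma>)"
proof -
  have sh: "\<sigma>h permutes {..<n}" using sigmah by (simp add: Omega_def)
  have sg: "\<sigma> permutes {..<n}" using sigma by (simp add: Omega_def)
  have n0: "0 < n" using n2 by simp
  have finS: "finite (Srearr n lam)" by (rule Srearr_finite)
  show ?thesis
  proof (cases "\<sigma> = \<sigma>h")
    case True
    have z: "\<And>k. k < n \<Longrightarrow> \<sigma>h \<noteq> sbar n k \<circ> \<sigma>h" using not_fix[OF n2 _ sh] by blast
    have fP: "fullP n a rho p \<mu>h \<sigma>h \<mu> \<sigma> = (if \<mu>h = \<mu> then 1 - real (Kfrak n rho \<sigma>h) / real n else 0)" for \<mu>h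
      unfolding fullP_def True using z by (auto intro!: sum.neutral)
    have aP: "auxP n rho \<sigma>h \<sigma> = 1 - real (Kfrak n rho \<sigma>h) / real n"
      unfolding auxP_def True using z by (auto intro!: sum.neutral)
    show ?thesis
    proof (intro exI[of _ "\<lambda>_ _. 0"] conjI allI impI ballI)
      fix R :: real
      have "(\<Sum>\<mu>h\<in>Srearr n lam. fullP n a rho p \<mu>h \<sigma>h \<mu> \<sigma> * Psi \<mu>h (act \<sigma>h (chi rho p R)) * (1 + 0))
          = (\<Sum>\<mu>h\<in>Srearr n lam. (if \<mu>h = \<mu> then (1 - real (Kfrak n rho \<sigma>h) / real n) * Psi \<mu>h (act \<sigma>h (chi rho p R)) else 0))"
        by (rule sum.cong) (auto simp: fP)
      also have "\<dots> = Psi \<mu> (act \<sigma> (chi rho p R)) * auxP n rho \<sigma>h \<sigma>"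
        using sum_if_delta[OF finS mu] aP True by simp
      finally show "(\<Sum>\<mu>h\<in>Srearr n lam. fullP n a rho p \<mu>h \<sigma>h \<mu> \<sigma> * Psi \<mu>h (act \<sigma>h (chi rho p R)) * (1 + 0))
          = Psi \<mu> (act \<sigma> (chi rho p R)) * auxP n rho \<sigma>h \<sigma>" .
    qed simp
  next
    case False
    obtain i where i: "i < n" "dcond n rho \<sigma>h i" "\<sigma> = sbar n i \<circ> \<sigma>h"
    proof -
      have "\<exists>i<n. dcond n rho \<sigma>h i \<and> \<sigma> = sbar n i \<circ> \<sigma>h"
      proof (rule ccontr)
        assume "\<not> (\<exists>i<n. dcond n rho \<sigma>h i \<and> \<sigma> = sbar n i \<circ> \<sigma>h)"
        hence "auxP n rho \<sigma>h \<sigma> = 0" unfolding auxP_def using False by (auto intro!: sum.neutral)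
        with pos show False by simp
      qed
      then show ?thesis using that by blast
    qed
    have iv: "inv \<sigma>h i < n" "inv \<sigma>h (nxt n i) < n"
      using permutes_in_image[OF permutes_inv[OF sh]] i(1) nxt_lt[OF n0] by auto
    have rho1: "rho (inv \<sigma>h i) = 1" and rho2: "rho (inv \<sigma>h (nxt n i)) = 2"
      using i(2) rho_vals[OF iv(1)] rho_vals[OF iv(2)] by (auto simp: dcond_def)
    have uniq: "k = i" if k: "k < n" "dcond n rho \<sigma>h k" "\<sigma> = sbar n k \<circ> \<sigma>h" for k
    proof (rule ccontr)
      assume ne: "k \<noteq> i"
      have eq: "sbar n k = sbar n i"
      proof
        fix y
        have "sbar n k (\<sigma>h (inv \<sigma>h y)) = sbar n i (\<sigma>h (inv \<sigma>h y))" using k(3) i(3) by (metis comp_apply)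
        thus "sbar n k y = sbar n i y" using permutes_inverses(1)[OF sh] by simp
      qed
      have v1: "sbar n k i = nxt n i" using eq by (simp add: sbar_transpose)
      have v2: "sbar n k i = (if i = nxt n k then k else i)" using ne
        by (simp add: sbar_transpose Transposition.transpose_def)
      have ik1: "i = nxt n k" using v1 v2 nxt_ne[OF n2 i(1)] by presburger
      have ik2: "nxt n i = k" using v1 v2 ik1 by simp
      have c1: "rho (inv \<sigma>h k) < rho (inv \<sigma>h i)" using k(2) unfolding dcond_def ik1[symmetric] .
      have c2: "rho (inv \<sigma>h i) < rho (inv \<sigma>h k)" using i(2) unfolding dcond_def ik2 .
      show False using c1 c2 by simp
    qed
    have aP: "auxP n rho \<sigma>h \<sigma> = 1 / real n"
    proof -
      have "(\<Sum>k<n. if dcond n rho \<sigma>h k \<and> \<sigma> = sbar n k \<circ> \<sigma>h then 1 / real n else 0)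
          = (\<Sum>k<n. if k = i then 1 / real n else 0)"
        by (rule sum.cong) (use uniq i in auto)
      also have "\<dots> = 1 / real n" using i(1) by (simp add: sum.delta)
      finally show ?thesis unfolding auxP_def using False by simp
    qed
    define P where "P = p (inv \<sigma>h i)"
    have P: "0 \<le> P" "P < 1" using p_range[OF iv(1) rho1] by (auto simp: P_def)
    have eqv: "(\<mu> = act (sbar n i) \<mu>h) = (\<mu>h = act (sbar n i) \<mu>)" for \<mu>h by (metis act_sbar_invol)
    have fP: "fullP n a rho p \<mu>h \<sigma>h \<mu> \<sigma> =
       (if \<mu>h = act (sbar n i) \<mu> then (if \<mu>h i > \<mu>h (nxt n i) then P * a (\<mu>h i) / real n else 0) else 0)
     + (if \<mu>h = \<mu> then (if \<mu>h i > \<mu>h (nxt n i) then (1 - P * a (\<mu>h i)) / real n else 1 / real n) else 0)"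
      for \<mu>h
    proof -
      let ?T = "\<lambda>k. if dcond n rho \<sigma>h k then
        (if \<mu>h k > \<mu>h (nxt n k) then
            (if \<mu> = act (sbar n k) \<mu>h \<and> \<sigma> = sbar n k \<circ> \<sigma>h
             then p (inv \<sigma>h k) * a (\<mu>h k) / real n else 0)
          + (if \<mu> = \<mu>h \<and> \<sigma> = sbar n k \<circ> \<sigma>h
             then (1 - p (inv \<sigma>h k) * a (\<mu>h k)) / real n else 0)
         else (if \<mu> = \<mu>h \<and> \<sigma> = sbar n k \<circ> \<sigma>h then 1 / real n else 0))
      else 0"
      have "(\<Sum>k<n. ?T k) = (\<Sum>k<n. if k = i then ?T i else 0)"
      proof (rule sum.cong[OF refl])
        fix k assume k: "k \<in> {..<n}"
        show "?T k = (if k = i then ?T i else 0)"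
        proof (cases "k = i")
          case True thus ?thesis by simp
        next
          case ki: False
          hence "\<not> (dcond n rho \<sigma>h k \<and> \<sigma> = sbar n k \<circ> \<sigma>h)" using uniq k by blast
          thus ?thesis using ki by auto
        qed
      qed
      also have "\<dots> = ?T i" using i(1) by (simp add: sum.delta)
      finally have "(\<Sum>k<n. ?T k) = ?T i" .
      moreover have "\<sigma> \<noteq> \<sigma>h" by (rule False)
      moreover note eqv[of \<mu>h]
      ultimately show ?thesis unfolding fullP_def using i(2) i(3)[symmetric] unfolding P_def
        by (smt (verit))
    qed
    define \<nu> where "\<nu> = act (sbar n i) \<mu>"
    have nuS: "\<nu> \<in> Srearr n lam" unfolding \<nu>_def by (rule Srearr_act[OF n2 i(1) mu])
    have nu_i: "\<nu> i = \<mu> (nxt n i)" "\<nu> (nxt n i) = \<mu> i" by (auto simp: \<nu>_def)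
    have LHS: "(\<Sum>\<mu>h\<in>Srearr n lam. fullP n a rho p \<mu>h \<sigma>h \<mu> \<sigma> * Psi \<mu>h (act \<sigma>h (chi rho p R)) * (1 + g \<mu>h R))
      = (if \<nu> i > \<nu> (nxt n i) then P * a (\<nu> i) / real n else 0) * Psi \<nu> (act \<sigma>h (chi rho p R)) * (1 + g \<nu> R)
      + (if \<mu> i > \<mu> (nxt n i) then (1 - P * a (\<mu> i)) / real n else 1 / real n) * Psi \<mu> (act \<sigma>h (chi rho p R)) * (1 + g \<mu> R)"
      for g R
    proof -
      have "(\<Sum>\<mu>h\<in>Srearr n lam. fullP n a rho p \<mu>h \<sigma>h \<mu> \<sigma> * Psi \<mu>h (act \<sigma>h (chi rho p R)) * (1 + g \<mu>h R))
        = (\<Sum>\<mu>h\<in>Srearr n lam. (if \<mu>h = \<nu> then (if \<mu>h i > \<mu>h (nxt n i) then P * a (\<mu>h i) / real n else 0) * Psi \<mu>h (act \<sigma>h (chi rho p R)) * (1 + g \<mu>h R) else 0)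
           + (if \<mu>h = \<mu> then (if \<mu>h i > \<mu>h (nxt n i) then (1 - P * a (\<mu>h i)) / real n else 1 / real n) * Psi \<mu>h (act \<sigma>h (chi rho p R)) * (1 + g \<mu>h R) else 0))"
        by (rule sum.cong) (auto simp: fP \<nu>_def distrib_right)
      then show ?thesis using finS mu nuS by (simp add: sum.distrib sum.delta)
    qed
    have yi: "act \<sigma>h (chi rho p R) i = (if P > 0 then 1 / P else R)" for R
      by (simp add: act_def chi_def rho1 P_def)
    have yj: "act \<sigma>h (chi rho p R) (nxt n i) = R" for R
      by (simp add: act_def chi_def rho2)
    have sy: "act \<sigma> (chi rho p R) = act (sbar n i) (act \<sigma>h (chi rho p R))" for R
      by (simp add: i(3) act_act permutes_bij[OF sh] permutes_bij[OF sbar_perm[OF n2 i(1)]])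
    have nuinv: "act (sbar n i) \<nu> = \<mu>" by (simp add: \<nu>_def)
    have n0r: "real n > 0" using n0 by simp
    show ?thesis
    proof (cases "\<mu> i = \<mu> (nxt n i)")
      case eq: True
      show ?thesis
      proof (intro exI[of _ "\<lambda>_ _. 0"] conjI allI impI ballI)
        fix R :: real assume R: "R > 1"
        show "(\<Sum>\<mu>h\<in>Srearr n lam. fullP n a rho p \<mu>h \<sigma>h \<mu> \<sigma> * Psi \<mu>h (act \<sigma>h (chi rho p R)) * (1 + 0))
          = Psi \<mu> (act \<sigma> (chi rho p R)) * auxP n rho \<sigma>h \<sigma>"
          using LHS[where g="\<lambda>_ _. 0" and R=R] Psi_sym[OF Psi mu i(1) eq] sy aP nu_i eq by simp
      qed simp
    next
      case ne: False
      show ?thesis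
      proof (cases "\<mu> i > \<mu> (nxt n i)")
        case gt: True
        define A where "A = a (\<mu> i)"
        have A: "0 < A" "A < 1" using a_range by (auto simp: A_def)
        have nlt: "\<nu> i < \<nu> (nxt n i)" using gt nu_i by simp
        show ?thesis
        proof (intro exI[of _ "\<lambda>h R. if h = \<mu> \<and> P > 0 then A / (R - A) else 0"] conjI allI impI ballI)
          fix h
          show "(\<lambda>R. if h = \<mu> \<and> P > 0 then A / (R - A) else 0) \<in> O[at_top](\<lambda>z. 1 / z)"
            using bigo_lem[OF A(2)] by (cases "h = \<mu> \<and> P > 0") auto
        next
          fix R :: real assume R: "R > 1"
          let ?y = "act \<sigma>h (chi rho p R)"
          have L: "(\<Sum>\<mu>h\<in>Srearr n lam. fullP n a rho p \<mu>h \<sigma>h \<mu> \<sigma> * Psi \<mu>h ?y * (1 + (if \<mu>h = \<mu> \<and> P > 0 then A / (R - A) else 0)))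
            = (1 - P * A) / real n * Psi \<mu> ?y * (1 + (if P > 0 then A / (R - A) else 0))"
            using LHS[where g="\<lambda>h R. if h = \<mu> \<and> P > 0 then A / (R - A) else 0" and R=R] nu_i gt by (simp add: A_def)
          have "(1 - P * A) / real n * Psi \<mu> ?y * (1 + (if P > 0 then A / (R - A) else 0))
               = Psi \<mu> (act \<sigma> (chi rho p R)) * (1 / real n)"
          proof (cases "P > 0")
            case Pp: True
            show ?thesis
            proof (cases "1 / P = R")
              case True
              have "act (sbar n i) ?y = ?y" by (rule act_sbar_eq) (simp add: yi yj Pp True)
              moreover have X: "(1 - P * A) * (1 + A / (R - A)) = 1"
              proof -
                have PR: "P * R = 1" using True Pp by auto
                have RA: "R - A \<noteq> 0" using A R by auto
                have "(1 - P * A) * (1 + A / (R - A)) = (1 - P*A) * R / (R - A)" using RA by (simp add: field_simps)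
                also have "(1 - P*A) * R = R - A * (P * R)" by (simp add: algebra_simps)
                finally show ?thesis using PR RA by simp
              qed
              moreover have "(1 - P * A) / real n * Psi \<mu> ?y * (1 + (if P > 0 then A / (R - A) else 0))
                 = ((1 - P*A) * (1 + A/(R-A))) * (Psi \<mu> ?y / real n)" using Pp by simp
              ultimately show ?thesis using sy[of R] by simp
            next
              case uR: False
              have yne: "?y i \<noteq> ?y (nxt n i)" using yi yj Pp uR by simp
              have E1: "?y i * (?y (nxt n i) - A) / (A * (?y i - ?y (nxt n i)))
                  * (Psi \<nu> ?y - Psi \<nu> (act (sbar n i) ?y)) = Psi \<mu> ?y"
                using Psi_exch[OF Psi nuS i(1) nlt yne] nu_i nuinv by (simp add: A_def)
              have yne2: "act (sbar n i) ?y i \<noteq> act (sbar n i) ?y (nxt n i)" using yne by simp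
              have E2: "?y (nxt n i) * (?y i - A) / (A * (?y (nxt n i) - ?y i))
                  * (Psi \<nu> (act (sbar n i) ?y) - Psi \<nu> ?y) = Psi \<mu> (act (sbar n i) ?y)"
                using Psi_exch[OF Psi nuS i(1) nlt yne2] nu_i nuinv by (simp add: A_def)
              define D where "D = Psi \<nu> ?y - Psi \<nu> (act (sbar n i) ?y)"
              have E1': "Psi \<mu> ?y = (1/P) * (R - A) / (A * (1/P - R)) * D"
                using E1 yi yj Pp by (simp add: D_def)
              have E2': "Psi \<mu> (act (sbar n i) ?y) = R * (1/P - A) / (A * (1/P - R)) * D"
              proof -
                have "R * (1/P - A) / (A * (R - 1/P)) * (- D) = Psi \<mu> (act (sbar n i) ?y)"
                  using E2 yi yj Pp by (simp add: D_def)
                moreover have "R * (1/P - A) / (A * (R - 1/P)) * (- D) = R * (1/P - A) / (A * (1/P - R)) * D"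
                proof -
                  have e: "A * (R - 1/P) = -(A * (1/P - R))" by (simp add: algebra_simps)
                  show ?thesis unfolding e by simp
                qed
                ultimately show ?thesis by simp
              qed
              have RA: "R - A \<noteq> 0" "1/P - R \<noteq> 0" using R A uR by auto
              have ifs: "(if P > 0 then A / (R - A) else 0) = A / (R - A)" using Pp by simp
              show ?thesis unfolding sy[of R] E1' E2' ifs
                by (rule L1[OF Pp RA(1) _ RA(2) n0r]) (use A in simp)
            qed
          next
            case Pn: False
            have "act (sbar n i) ?y = ?y" by (rule act_sbar_eq) (simp add: yi yj Pn)
            moreover have "P = 0" using Pn P by simp
            ultimately show ?thesis using sy[of R] by simp
          qed
          thus "(\<Sum>\<mu>h\<in>Srearr n lam. fullP n a rho p \<mu>h \<sigma>h \<mu> \<sigma> * Psi \<mu>h ?y * (1 + (if \<mu>h = \<mu> \<and> P > 0 then A / (R - A) else 0)))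
            = Psi \<mu> (act \<sigma> (chi rho p R)) * auxP n rho \<sigma>h \<sigma>"
            using L aP by simp
        qed
      next
        case lt0: False
        have lt: "\<mu> i < \<mu> (nxt n i)" using lt0 ne by simp
        define A where "A = a (\<mu> (nxt n i))"
        have A: "0 < A" "A < 1" using a_range by (auto simp: A_def)
        have ngt: "\<nu> i > \<nu> (nxt n i)" using lt nu_i by simp
        have munu: "\<mu> \<noteq> \<nu>" using nu_i ne by auto
        show ?thesis
        proof (intro exI[of _ "\<lambda>h R. if h = \<nu> \<and> P > 0 then (A - 1/P) / (R - A) else 0"] conjI allI impI ballI)
          fix h
          show "(\<lambda>R. if h = \<nu> \<and> P > 0 then (A - 1/P) / (R - A) else 0) \<in> O[at_top](\<lambda>z. 1 / z)"
            using bigo_lem[OF A(2)] by (cases "h = \<nu> \<and> P > 0") auto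
        next
          fix R :: real assume R: "R > 1"
          let ?y = "act \<sigma>h (chi rho p R)"
          have L: "(\<Sum>\<mu>h\<in>Srearr n lam. fullP n a rho p \<mu>h \<sigma>h \<mu> \<sigma> * Psi \<mu>h ?y * (1 + (if \<mu>h = \<nu> \<and> P > 0 then (A - 1/P) / (R - A) else 0)))
            = P * A / real n * Psi \<nu> ?y * (1 + (if P > 0 then (A - 1/P) / (R - A) else 0))
              + 1 / real n * Psi \<mu> ?y"
            using LHS[where g="\<lambda>h R. if h = \<nu> \<and> P > 0 then (A - 1/P) / (R - A) else 0" and R=R] nu_i lt ngt munu
            by (simp add: A_def)
          have "P * A / real n * Psi \<nu> ?y * (1 + (if P > 0 then (A - 1/P) / (R - A) else 0))
              + 1 / real n * Psi \<mu> ?y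
               = Psi \<mu> (act \<sigma> (chi rho p R)) * (1 / real n)"
          proof (cases "P > 0")
            case Pp: True
            show ?thesis
            proof (cases "1 / P = R")
              case True
              have "act (sbar n i) ?y = ?y" by (rule act_sbar_eq) (simp add: yi yj Pp True)
              moreover have "1 + (A - 1/P) / (R - A) = 0"
              proof -
                have e: "A - 1/P = -(R - A)" using True by simp
                have "R - A \<noteq> 0" using A R by simp
                hence "1 + (A - R) / (R - A) = 0" by (simp add: field_simps)
                thus ?thesis using True by simp
              qed
              ultimately show ?thesis using Pp sy[of R] by simp
            next
              case uR: False
              have yne: "?y i \<noteq> ?y (nxt n i)" using yi yj Pp uR by simp
              have E: "?y i * (?y (nxt n i) - A) / (A * (?y i - ?y (nxt n i)))
                  * (Psi \<mu> ?y - Psi \<mu> (act (sbar n i) ?y)) = Psi \<nu> ?y"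
                using Psi_exch[OF Psi mu i(1) lt yne] by (simp add: A_def \<nu>_def)
              have E': "Psi \<nu> ?y = (1/P) * (R - A) / (A * (1/P - R)) * (Psi \<mu> ?y - Psi \<mu> (act (sbar n i) ?y))"
                using E yi yj Pp by simp
              have RA: "R - A \<noteq> 0" "1/P - R \<noteq> 0" using R A uR by auto
              have ifs: "(if P > 0 then (A - 1/P) / (R - A) else 0) = (A - 1/P) / (R - A)" using Pp by simp
              show ?thesis unfolding sy[of R] E' ifs
                by (rule L2[OF Pp RA(1) _ RA(2) n0r]) (use A in simp)
            qed
          next
            case Pn: False
            have "act (sbar n i) ?y = ?y" by (rule act_sbar_eq) (simp add: yi yj Pn)
            moreover have "P = 0" using Pn P by simp
            ultimately show ?thesis using sy[of R] by simp
          qed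
          thus "(\<Sum>\<mu>h\<in>Srearr n lam. fullP n a rho p \<mu>h \<sigma>h \<mu> \<sigma> * Psi \<mu>h ?y * (1 + (if \<mu>h = \<nu> \<and> P > 0 then (A - 1/P) / (R - A) else 0)))
            = Psi \<mu> (act \<sigma> (chi rho p R)) * auxP n rho \<sigma>h \<sigma>"
            using L aP by simp
        qed
      qed
    qed
  qed
qed

end
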